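(* Let $S=\{(x_1,x_2)\in\mathbb{R}^2:x_1\ge0,\ x_1^2-x_2^3\ge0\}$ and $\tilde S^{o}=\{(x_0,x_1,x_2):x_1\ge0,\ x_0x_1^2-x_2^3\ge0,\ x_0>0\}$, $\tilde S^{c}=\{(x_0,x_1,x_2):x_1\ge0,\ x_0x_1^2-x_2^3\ge0,\ x_0\ge0\}$. Then $\overline{\tilde S^{o}}=\tilde S^{c}$ (so $S$ is closed at $\infty$), the linear form $2X_0+2X_1-3X_2$ is positive on $\mathrm{conv}(\overline{\tilde S^{o}})\setminus\{0\}$ (so $\mathrm{conv}(\overline{\tilde S^{o}})$ is closed and pointed), and consequently, with $\tilde G=\{X_1,X_0X_1^2-X_2^3,X_0,X_0^2+X_1^2+X_2^2-1,1-X_0^2-X_1^2-X_2^2\}$, $\overline{\mathrm{conv}(S)}=\bigcap_{k\ge1}\widetilde{\mathrm{TH}}_k(\tilde G)$.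
   Context: For a finite set $H$ of polynomials, $\mathcal{Q}_k(H)=\{\sum_{j}\sigma_jh_j:h_0=1,\ \sigma_j\text{ sums of squares},\ \deg(\sigma_jh_j)\le2k\}$. $\widetilde{\mathrm{TH}}_k(\tilde G)=\{(x_1,x_2):\tilde l(1,x_1,x_2)\ge0\ \forall\tilde l\in\mathcal{Q}_k(\tilde G)\text{ that is a linear form in }(X_0,X_1,X_2)\text{ or }0\}$. A closed convex cone $K$ is pointed if $K\cap(-K)=\{0\}$. *)

theory Defs
  imports "HOL-Analysis.Analysis" "HOL-Library.Poly_Mapping" "HOL-Library.Product_Plus"
begin

text \<open>A monomial
 X0^a * X1^b * X2^c is represented by its exponent triple (a,b,c); a polynomial
 is a finitely supported map from exponent triples to real coefficients.
 Multiplication is the convolution product of Poly_Mapping.\<close>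

type_synonym poly3 = "(nat \<times> nat \<times> nat) \<Rightarrow>\<^sub>0 real"

definition X0 :: poly3 where "X0 = Poly_Mapping.single (1,0,0) 1"
definition X1 :: poly3 where "X1 = Poly_Mapping.single (0,1,0) 1"
definition X2 :: poly3 where "X2 = Poly_Mapping.single (0,0,1) 1"

definition mdeg :: "nat \<times> nat \<times> nat \<Rightarrow> nat" where
  "mdeg m = (case m of (a,b,c) \<Rightarrow> a + b + c)"

text \<open>Total degree (the zero polynomial gets degree 0).\<close>
definition pdeg :: "poly3 \<Rightarrow> nat" where
  "pdeg p = Max (insert 0 (mdeg ` Poly_Mapping.keys p))"

definition peval :: "poly3 \<Rightarrow> real \<times> real \<times> real \<Rightarrow> real" where
  "peval p x = (case x of (x0,x1,x2) \<Rightarrow>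
     (\<Sum>m\<in>Poly_Mapping.keys p. case m of (a,b,c) \<Rightarrow>
        Poly_Mapping.lookup p m * x0^a * x1^b * x2^c))"

definition is_sos :: "poly3 \<Rightarrow> bool" where
  "is_sos \<sigma> \<longleftrightarrow> (\<exists>qs. \<sigma> = sum_list (map (\<lambda>q. q * q) qs))"

definition quadmod :: "nat \<Rightarrow> poly3 set \<Rightarrow> poly3 set" where
  "quadmod k H = {p. \<exists>\<sigma>0 \<sigma>. is_sos \<sigma>0 \<and> pdeg \<sigma>0 \<le> 2*k \<and>
      (\<forall>h\<in>H. is_sos (\<sigma> h) \<and> pdeg (\<sigma> h * h) \<le> 2*k) \<and>
      p = \<sigma>0 + (\<Sum>h\<in>H. \<sigma> h * h)}"

text \<open>Linear forms in X0,X1,X2 (homogeneous of degree 1), including 0.\<close>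
definition is_linform :: "poly3 \<Rightarrow> bool" where
  "is_linform l \<longleftrightarrow> (\<forall>m\<in>Poly_Mapping.keys l. mdeg m = 1)"

definition THk :: "nat \<Rightarrow> poly3 set \<Rightarrow> (real \<times> real) set" where
  "THk k G = {(x1,x2). \<forall>l\<in>quadmod k G. is_linform l \<longrightarrow> peval l (1,x1,x2) \<ge> 0}"

definition S :: "(real \<times> real) set" where
  "S = {(x1,x2). x1 \<ge> 0 \<and> x1^2 - x2^3 \<ge> 0}"

definition St_open :: "(real \<times> real \<times> real) set" where
  "St_open = {(x0,x1,x2). x1 \<ge> 0 \<and> x0 * x1^2 - x2^3 \<ge> 0 \<and> x0 > 0}"

definition St_closed :: "(real \<times> real \<times> real) set" where
  "St_closed = {(x0,x1,x2). x1 \<ge> 0 \<and> x0 * x1^2 - x2^3 \<ge> 0 \<and> x0 \<ge> 0}"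

definition Gt :: "poly3 set" where
  "Gt = {X1, X0 * X1^2 - X2^3, X0, X0^2 + X1^2 + X2^2 - 1, 1 - X0^2 - X1^2 - X2^2}"

end

theory Submission
  imports Defs
begin


definition mon :: "nat \<times> nat \<times> nat \<Rightarrow> real \<times> real \<times> real \<Rightarrow> real" where
  "mon m x = (case m of (a,b,c) \<Rightarrow> (case x of (x0,x1,x2) \<Rightarrow> x0^a * x1^b * x2^c))"

lemma peval_mon: "peval p x = (\<Sum>m\<in>Poly_Mapping.keys p. Poly_Mapping.lookup p m * mon m x)"
  unfolding peval_def mon_def
  by (cases x) (auto intro!: sum.cong split: prod.splits)

lemma peval_superset:
  assumes "finite A" "Poly_Mapping.keys p \<subseteq> A"
  shows "peval p x = (\<Sum>m\<in>A. Poly_Mapping.lookup p m * mon m x)"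
  unfolding peval_mon
  by (rule sum.mono_neutral_left[OF assms]) (auto simp: in_keys_iff)

lemma peval_add: "peval (p + q) x = peval p x + peval q x"
proof -
  let ?A = "Poly_Mapping.keys p \<union> Poly_Mapping.keys q"
  have f: "finite ?A" by simp
  have "peval (p+q) x = (\<Sum>m\<in>?A. Poly_Mapping.lookup (p+q) m * mon m x)"
    using keys_add[of p q] by (intro peval_superset[OF f]) simp
  also have "\<dots> = (\<Sum>m\<in>?A. Poly_Mapping.lookup p m * mon m x) + (\<Sum>m\<in>?A. Poly_Mapping.lookup q m * mon m x)"
    by (simp add: lookup_add algebra_simps sum.distrib)
  also have "\<dots> = peval p x + peval q x"
    by (simp add: peval_superset[OF f, symmetric])
  finally show ?thesis .
qed

lemma peval_uminus: "peval (- p) x = - peval p x"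
  unfolding peval_mon by (simp add: sum_negf)

lemma peval_diff: "peval (p - q) x = peval p x - peval q x"
  using peval_add[of p "-q" x] by (simp add: peval_uminus)

lemma peval_zero [simp]: "peval 0 x = 0"
  unfolding peval_mon by simp

lemma peval_sum: "peval (\<Sum>i\<in>I. f i) x = (\<Sum>i\<in>I. peval (f i) x)"
  by (induction I rule: infinite_finite_induct) (auto simp: peval_add)

lemma peval_single: "peval (Poly_Mapping.single m c) x = c * mon m x"
  unfolding peval_mon by simp

lemma mon_add: "mon (a + b) x = mon a x * mon b x"
  unfolding mon_def by (cases a; cases b; cases x) (simp add: power_add)

lemma poly_expand: "p = (\<Sum>m\<in>Poly_Mapping.keys p. Poly_Mapping.single m (Poly_Mapping.lookup p m))"
  by (rule poly_mapping_eqI) (simp add: lookup_sum lookup_single when_def in_keys_iff)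

lemma peval_mult: "peval (p * q) x = peval p x * peval q x"
proof -
  have "p * q = (\<Sum>a\<in>Poly_Mapping.keys p. \<Sum>b\<in>Poly_Mapping.keys q.
      Poly_Mapping.single a (Poly_Mapping.lookup p a) * Poly_Mapping.single b (Poly_Mapping.lookup q b))"
    by (subst poly_expand[of p], subst poly_expand[of q]) (simp add: sum_product)
  then have "peval (p*q) x = (\<Sum>a\<in>Poly_Mapping.keys p. \<Sum>b\<in>Poly_Mapping.keys q.
      (Poly_Mapping.lookup p a * mon a x) * (Poly_Mapping.lookup q b * mon b x))"
    by (simp add: peval_sum mult_single peval_single mon_add mult_ac)
  also have "\<dots> = peval p x * peval q x"
    by (simp add: peval_mon sum_product)
  finally show ?thesis .
qed

lemma mon_zero [simp]: "mon 0 x = 1"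
  by (cases x) (simp add: mon_def zero_prod_def)

lemma peval_one [simp]: "peval 1 x = 1"
  using peval_single[of 0 1 x] by simp

lemma peval_power: "peval (p ^ n) x = peval p x ^ n"
  by (induction n) (auto simp: peval_mult)

lemma peval_X0 [simp]: "peval X0 (a,b,c) = a"
  by (simp add: X0_def peval_single mon_def)
lemma peval_X1 [simp]: "peval X1 (a,b,c) = b"
  by (simp add: X1_def peval_single mon_def)
lemma peval_X2 [simp]: "peval X2 (a,b,c) = c"
  by (simp add: X2_def peval_single mon_def)

definition const :: "real \<Rightarrow> poly3" where "const c = Poly_Mapping.single 0 c"

lemma peval_const [simp]: "peval (const c) x = c"
  by (simp add: const_def peval_single)

lemma peval_numeral [simp]: "peval (numeral n) x = numeral n"
  using peval_const[of "numeral n" x] by (simp add: const_def)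

lemmas peval_simps = peval_add peval_diff peval_uminus peval_mult peval_power




lemma const_mult: "const a * const b = const (a*b)"
  by (simp add: const_def mult_single)
lemma const_add: "const (a + b) = const a + const b"
  by (simp add: const_def single_add)
lemma const_diff: "const (a - b) = const a - const b"
  by (simp add: const_def single_diff)
lemma const_one [simp]: "const 1 = 1"
  by (simp add: const_def)
lemma const_zero [simp]: "const 0 = 0"
  by (simp add: const_def)
lemma const_of_nat: "const (of_nat n) = of_nat n"
  by (simp add: const_def)
lemma const_numeral: "const (numeral n) = numeral n"
  by (simp add: const_def)
lemma const_power: "const (a ^ n) = const a ^ n"
  by (induction n) (auto simp: const_mult[symmetric])

lemma is_sos_0 [simp]: "is_sos 0"
  unfolding is_sos_def by (rule exI[of _ "[]"]) simp

lemma is_sos_sq: "is_sos (q * q)"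
  unfolding is_sos_def by (rule exI[of _ "[q]"]) simp

lemma is_sos_add: "is_sos a \<Longrightarrow> is_sos b \<Longrightarrow> is_sos (a + b)"
proof -
  assume "is_sos a" "is_sos b"
  then obtain qs rs where "a = sum_list (map (\<lambda>q. q * q) qs)" "b = sum_list (map (\<lambda>q. q * q) rs)"
    unfolding is_sos_def by blast
  then have "a + b = sum_list (map (\<lambda>q. q * q) (qs @ rs))" by simp
  then show ?thesis unfolding is_sos_def by blast
qed

lemma is_sos_sq_mult: "is_sos b \<Longrightarrow> is_sos (q * q * b)"
proof -
  assume "is_sos b"
  then obtain rs where b: "b = sum_list (map (\<lambda>q. q * q) rs)" unfolding is_sos_def by blast
  have "q * q * sum_list (map (\<lambda>q. q * q) rs) = sum_list (map (\<lambda>r. r * r) (map (\<lambda>r. q * r) rs))"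
    by (induction rs) (simp_all add: algebra_simps)
  then show ?thesis unfolding is_sos_def b by blast
qed

lemma is_sos_mult: "is_sos a \<Longrightarrow> is_sos b \<Longrightarrow> is_sos (a * b)"
proof -
  assume a: "is_sos a" and b: "is_sos b"
  then obtain qs where "a = sum_list (map (\<lambda>q. q * q) qs)" unfolding is_sos_def by blast
  moreover have "is_sos (sum_list (map (\<lambda>q. q * q) qs) * b)"
    by (induction qs) (simp_all add: distrib_right is_sos_add is_sos_sq_mult b)
  ultimately show ?thesis by simp
qed

lemma is_sos_const: "c \<ge> 0 \<Longrightarrow> is_sos (const c)"
  using is_sos_sq[of "const (sqrt c)"] by (simp add: const_mult)

definition RR :: poly3 where "RR = X0^2 + X1^2 + X2^2"
definition gg :: poly3 where "gg = X0 * X1^2 - X2^3"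

definition PP :: "poly3 set" where
  "PP = {p. \<exists>s q. is_sos s \<and> p = s + (RR - 1) * q}"

definition MM :: "poly3 set" where
  "MM = {p. \<exists>s0 s1 s2 s3 q. is_sos s0 \<and> is_sos s1 \<and> is_sos s2 \<and> is_sos s3 \<and>
          p = s0 + X1 * s1 + gg * s2 + X0 * s3 + (RR - 1) * q}"

lemma PP_I: "is_sos s \<Longrightarrow> p = s + (RR - 1) * q \<Longrightarrow> p \<in> PP"
  unfolding PP_def by blast
lemma PP_E: "p \<in> PP \<Longrightarrow> (\<And>s q. is_sos s \<Longrightarrow> p = s + (RR - 1) * q \<Longrightarrow> thesis) \<Longrightarrow> thesis"
  unfolding PP_def by blast
lemma MM_I: "is_sos s0 \<Longrightarrow> is_sos s1 \<Longrightarrow> is_sos s2 \<Longrightarrow> is_sos s3 \<Longrightarrow>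
   p = s0 + X1 * s1 + gg * s2 + X0 * s3 + (RR - 1) * q \<Longrightarrow> p \<in> MM"
  unfolding MM_def by blast
lemma MM_E: "p \<in> MM \<Longrightarrow> (\<And>s0 s1 s2 s3 q. is_sos s0 \<Longrightarrow> is_sos s1 \<Longrightarrow> is_sos s2 \<Longrightarrow> is_sos s3 \<Longrightarrow>
   p = s0 + X1 * s1 + gg * s2 + X0 * s3 + (RR - 1) * q \<Longrightarrow> thesis) \<Longrightarrow> thesis"
  unfolding MM_def by blast

lemma sos_PP: "is_sos s \<Longrightarrow> s \<in> PP"
  by (rule PP_I[of s _ 0]) auto

lemma sq_PP: "q * q \<in> PP"
  by (rule sos_PP[OF is_sos_sq])

lemma ideal_PP: "(RR - 1) * q \<in> PP"
  by (rule PP_I[of 0 _ q]) auto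

lemma const_PP: "c \<ge> 0 \<Longrightarrow> const c \<in> PP"
  by (rule sos_PP[OF is_sos_const])

lemma PP_add: "a \<in> PP \<Longrightarrow> b \<in> PP \<Longrightarrow> a + b \<in> PP"
proof -
  assume "a \<in> PP" "b \<in> PP"
  then obtain s q s' q' where h: "is_sos s" "is_sos s'" and a: "a = s + (RR - 1) * q" and b: "b = s' + (RR - 1) * q'"
    by (metis PP_E)
  show ?thesis unfolding a b by (rule PP_I[of "s + s'" _ "q + q'"]) (auto simp: algebra_simps is_sos_add h)
qed

lemma PP_mult: "a \<in> PP \<Longrightarrow> b \<in> PP \<Longrightarrow> a * b \<in> PP"
proof -
  assume "a \<in> PP" "b \<in> PP"
  then obtain s q s' q' where h: "is_sos s" "is_sos s'" and a: "a = s + (RR - 1) * q" and b: "b = s' + (RR - 1) * q'"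
    by (metis PP_E)
  show ?thesis unfolding a b by (rule PP_I[of "s * s'" _ "q * s' + s * q' + q * q' * (RR - 1)"])
      (auto simp: algebra_simps is_sos_mult h)
qed

lemma PP_1: "1 \<in> PP"
  using const_PP[of 1] by simp

lemma PP_power: "a \<in> PP \<Longrightarrow> a ^ n \<in> PP"
  by (induction n) (auto simp: PP_1 PP_mult)

lemma PP_of_nat: "of_nat n \<in> PP"
  using const_PP[of "of_nat n"] by (simp add: const_of_nat)

lemma PP_numeral: "numeral n \<in> PP"
  using const_PP[of "numeral n"] by (simp add: const_numeral)

lemma PP_sum: "(\<And>i. i \<in> I \<Longrightarrow> f i \<in> PP) \<Longrightarrow> (\<Sum>i\<in>I. f i) \<in> PP"
  by (induction I rule: infinite_finite_induct) (auto simp: PP_add sos_PP)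

lemma PP_ideal_shift: "a \<in> PP \<Longrightarrow> a + (RR - 1) * q \<in> PP"
  by (rule PP_add[OF _ ideal_PP])

lemma PP_eq_shift: "a \<in> PP \<Longrightarrow> b = a + (RR - 1) * q \<Longrightarrow> b \<in> PP"
  using PP_ideal_shift by simp

lemma PP_scale_inv: "const c * a \<in> PP \<Longrightarrow> c > 0 \<Longrightarrow> a \<in> PP"
proof -
  assume "const c * a \<in> PP" "c > 0"
  then have "const (1/c) * (const c * a) \<in> PP" using PP_mult[OF const_PP[of "1/c"]] \<open>c > 0\<close> by simp
  moreover have "const (1/c) * (const c * a) = a" using \<open>c > 0\<close>
    by (simp add: mult.assoc[symmetric] const_mult)
  ultimately show ?thesis by simp
qed

lemma MM_add: "a \<in> MM \<Longrightarrow> b \<in> MM \<Longrightarrow> a + b \<in> MM"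
proof -
  assume "a \<in> MM" "b \<in> MM"
  then obtain s0 s1 s2 s3 q t0 t1 t2 t3 r where
    "is_sos s0" "is_sos s1" "is_sos s2" "is_sos s3" "a = s0 + X1 * s1 + gg * s2 + X0 * s3 + (RR - 1) * q"
    "is_sos t0" "is_sos t1" "is_sos t2" "is_sos t3" "b = t0 + X1 * t1 + gg * t2 + X0 * t3 + (RR - 1) * r"
    by (metis MM_E)
  then show ?thesis
    by (intro MM_I[of "s0 + t0" "s1 + t1" "s2 + t2" "s3 + t3" _ "q + r"]) (auto simp: algebra_simps is_sos_add)
qed

lemma MM_mult_PP: "a \<in> MM \<Longrightarrow> b \<in> PP \<Longrightarrow> a * b \<in> MM"
proof -
  assume "a \<in> MM" "b \<in> PP"
  then obtain s0 s1 s2 s3 q s r where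
    "is_sos s0" "is_sos s1" "is_sos s2" "is_sos s3" "a = s0 + X1 * s1 + gg * s2 + X0 * s3 + (RR - 1) * q"
    "is_sos s" "b = s + (RR - 1) * r"
    by (metis MM_E PP_E)
  moreover have "(s0 + X1 * s1 + gg * s2 + X0 * s3 + (RR - 1) * q) * (s + (RR - 1) * r)
     = s0 * s + X1 * (s1 * s) + gg * (s2 * s) + X0 * (s3 * s) + (RR - 1) * (q * s + q * r * (RR - 1) + r * (s0 + X1 * s1 + gg * s2 + X0 * s3))"
    by (simp add: algebra_simps)
  ultimately show ?thesis
    by (intro MM_I[of "s0 * s" "s1 * s" "s2 * s" "s3 * s" _ "q * s + q * r * (RR - 1) + r * (s0 + X1 * s1 + gg * s2 + X0 * s3)"])
      (auto simp: is_sos_mult)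
qed

lemma PP_MM: "a \<in> PP \<Longrightarrow> a \<in> MM"
  by (erule PP_E) (rule MM_I[of _ 0 0 0], auto)

lemma is_sos_1: "is_sos 1"
  using is_sos_sq[of 1] by simp

lemma X0_MM: "X0 \<in> MM"
  by (rule MM_I[of 0 0 0 1 _ 0]) (auto simp: is_sos_1)
lemma X1_MM: "X1 \<in> MM"
  by (rule MM_I[of 0 1 0 0 _ 0]) (auto simp: is_sos_1)
lemma gg_MM: "gg \<in> MM"
  by (rule MM_I[of 0 0 1 0 _ 0]) (auto simp: is_sos_1)

lemma MM_eq: "a \<in> MM \<Longrightarrow> b = a \<Longrightarrow> b \<in> MM" by simp

lemma MM_scale_inv: "const c * a \<in> MM \<Longrightarrow> c > 0 \<Longrightarrow> a \<in> MM"
proof -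
  assume "const c * a \<in> MM" "c > 0"
  then have "(const c * a) * const (1/c) \<in> MM" using MM_mult_PP const_PP[of "1/c"] \<open>c > 0\<close> by simp
  moreover have "(const c * a) * const (1/c) = a"
  proof -
    have "(const c * a) * const (1/c) = a * (const c * const (1/c))" by (simp only: mult_ac)
    also have "const c * const (1/c) = 1" using \<open>c > 0\<close> by (simp add: const_mult)
    finally show ?thesis by simp
  qed
  ultimately show ?thesis by simp
qed




lemma tele:
  assumes "u \<in> PP" "1 - u \<in> PP"
  shows "1 - of_nat (Suc N) * (1 - u) * u^N - u^(Suc N) \<in> PP"
proof (induction N)
  case 0
  then show ?case using sos_PP[OF is_sos_0] by simp
next
  case (Suc N)
  have eq: "1 - of_nat (Suc (Suc N)) * (1 - u) * u^(Suc N) - u^(Suc (Suc N)) =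
    (1 - of_nat (Suc N) * (1 - u) * u^N - u^(Suc N)) + of_nat (Suc N) * ((1 - u) * (1 - u)) * u^N"
  proof -
    have "\<And>n U :: poly3. 1 - (n + 1) * (1 - u) * (u * U) - u * (u * U) = (1 - n * (1 - u) * U - u * U) + n * ((1 - u) * (1 - u)) * U"
      by (simp add: algebra_simps)
    from this[of "of_nat (Suc N)" "u^N"] show ?thesis by (simp add: power_Suc)
  qed
  show ?case unfolding eq
    by (intro PP_add Suc PP_mult PP_of_nat sq_PP PP_power assms)
qed

lemma ident_arch:
  fixes C Q u l U T K n :: "'a::comm_ring_1"
  shows "2*T*C*n*(l*U + T) = n*C*((l+T)*(l+T))*U + n*C*(K*Q - l*l)*U + K*(1 - n*(C*Q)*U)
           + T*T*C*n*(1 - U) + (T*T*C*n - K)"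
  by (simp add: algebra_simps)

lemma arch:
  assumes lQ: "l * Q \<in> MM" and Q: "Q \<in> PP" and cQ: "const c1 * RR - Q \<in> PP"
    and kQ: "const k * Q - l * l \<in> PP" and c1: "c1 > 0" and k: "k \<ge> 0" and th: "th > 0"
  shows "l + const th \<in> MM"
proof -
  define c where "c = 1 / c1"
  have c: "c > 0" using c1 by (simp add: c_def)
  have Cc1: "const c * const c1 = 1" using c1 by (simp add: const_mult c_def)
  define u where "u = 1 - const c * Q"
  have "u = const c * (const c1 * RR - Q) + (RR - 1) * (-1)"
  proof -
    have "const c * (const c1 * RR - Q) + (RR - 1) * (-1) = (const c * const c1) * RR - const c * Q - RR + 1"
      by (simp add: algebra_simps)
    then show ?thesis unfolding u_def Cc1 by simp
  qed
  moreover have "const c * (const c1 * RR - Q) \<in> PP" using PP_mult[OF const_PP cQ] c by simp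
  ultimately have u: "u \<in> PP" using PP_eq_shift by blast
  have u1e: "1 - u = const c * Q" by (simp add: u_def)
  have u1: "1 - u \<in> PP" unfolding u1e using PP_mult[OF const_PP Q] c by simp
  obtain N :: nat where N: "k / (th^2 * c) < real N" using reals_Archimedean2 by blast
  have N': "k \<le> th^2 * c * real (Suc N)"
  proof -
    have "k < th^2 * c * real N" using N th c by (simp add: field_simps)
    moreover have "th^2 * c * real N \<le> th^2 * c * real (Suc N)" using th c by simp
    ultimately show ?thesis by simp
  qed
  define G where "G = (\<Sum>i<N. u^i)"
  have G: "G \<in> PP" unfolding G_def by (intro PP_sum PP_power u)
  have omu: "1 - u^N = (1 - u) * G" unfolding G_def by (rule one_diff_power_eq)
  have A1: "l * (1 - u^N) \<in> MM"
  proof -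
    have "l * (1 - u^N) = (l * Q) * (const c * G)" unfolding omu u1e by (simp add: algebra_simps)
    then show ?thesis using MM_mult_PP[OF lQ PP_mult[OF const_PP G]] c by simp
  qed
  have omuP: "1 - u^N \<in> PP" unfolding omu by (intro PP_mult u1 G)
  have tel: "1 - of_nat (Suc N) * (const c * Q) * u^N \<in> PP"
  proof -
    have "1 - of_nat (Suc N) * (1 - u) * u^N = (1 - of_nat (Suc N) * (1 - u) * u^N - u^(Suc N)) + u^(Suc N)"
      by simp
    then have "1 - of_nat (Suc N) * (1 - u) * u^N \<in> PP"
      using PP_add[OF tele[OF u u1] PP_power[OF u]] by metis
    then show ?thesis unfolding u1e .
  qed
  define n :: poly3 where "n = of_nat (Suc N)"
  have nP: "n \<in> PP" unfolding n_def by (rule PP_of_nat)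
  have cn: "const (real (Suc N)) = n" unfolding n_def by (rule const_of_nat)
  have A2: "const (2*th*c*real (Suc N)) * (l * u^N + const th) \<in> PP"
  proof -
    have e1: "const (2*th*c*real (Suc N)) = 2 * const th * const c * n"
      by (simp only: const_mult[symmetric] const_numeral[symmetric] cn[symmetric])
    have e2: "const (th*th*c*real(Suc N) - k) = const th * const th * const c * n - const k"
      by (simp only: const_diff const_mult[symmetric] cn[symmetric])
    have e3: "const (th*th*c*real(Suc N)) = const th * const th * const c * n"
      by (simp only: const_mult[symmetric] cn[symmetric])
    have P5: "const (th*th*c*real(Suc N) - k) \<in> PP" using N' by (intro const_PP) (simp add: power2_eq_square)
    have P4: "const (th*th*c*real(Suc N)) * (1 - u^N) \<in> PP"
      using th c by (intro PP_mult const_PP omuP) simp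
    have P1: "n * const c * ((l + const th) * (l + const th)) * u^N \<in> PP"
      using c by (intro PP_mult nP const_PP sq_PP PP_power u) simp
    have P2: "n * const c * (const k * Q - l * l) * u^N \<in> PP"
      using c by (intro PP_mult nP const_PP kQ PP_power u) simp
    have P3: "const k * (1 - n * (const c * Q) * u^N) \<in> PP"
      using k tel unfolding n_def by (intro PP_mult const_PP) simp_all
    have "const (2*th*c*real (Suc N)) * (l * u^N + const th) =
       n * const c * ((l + const th) * (l + const th)) * u^N + n * const c * (const k * Q - l * l) * u^N
       + const k * (1 - n * (const c * Q) * u^N) + const (th*th*c*real(Suc N)) * (1 - u^N)
       + const (th*th*c*real(Suc N) - k)"
      unfolding e1 e2 e3 by (rule ident_arch)
    then show ?thesis using P1 P2 P3 P4 P5 by (metis PP_add)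
  qed
  have A3: "l * u^N + const th \<in> PP"
    by (rule PP_scale_inv[OF A2]) (use th c in simp)
  have eq: "l * (1 - u^N) + (l * u^N + const th) = l + const th" by (simp add: algebra_simps)
  show ?thesis using MM_add[OF A1 PP_MM[OF A3]] unfolding eq .
qed




lemma id_half:
  fixes a b w R :: "'a::comm_ring_1"
  assumes "R = a*a + b*b + w*w"
  shows "2 * (1 - w) = (1 - w) * (1 - w) + a * a + b * b + (R - 1) * (-1)"
  using assms by (simp add: algebra_simps)

lemma id_half':
  fixes a b w R :: "'a::comm_ring_1"
  assumes "R = a*a + b*b + w*w"
  shows "2 * (1 + w) = (1 + w) * (1 + w) + a * a + b * b + (R - 1) * (-1)"
  using assms by (simp add: algebra_simps)

lemma half_PP: "2 * a = s + (RR - 1) * q \<Longrightarrow> is_sos s \<Longrightarrow> a \<in> PP"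
  by (rule PP_scale_inv[of 2]) (auto simp: const_numeral intro: PP_I)

lemma sum3_sos: "is_sos (a * a + b * b + c * c)"
  by (intro is_sos_add is_sos_sq)

lemma omX2: "1 - X2 \<in> PP"
  by (rule half_PP[OF id_half sum3_sos]) (simp add: RR_def power2_eq_square)
lemma opX2: "1 + X2 \<in> PP"
  by (rule half_PP[OF id_half' sum3_sos]) (simp add: RR_def power2_eq_square)
lemma omX0: "1 - X0 \<in> PP"
  by (rule half_PP[OF id_half[of _ X1 X2] sum3_sos]) (simp add: RR_def power2_eq_square add_ac)
lemma omX1: "1 - X1 \<in> PP"
  by (rule half_PP[OF id_half[of _ X0 X2] sum3_sos]) (simp add: RR_def power2_eq_square add_ac)

lemma id_E1:
  fixes x y z :: "'a::comm_ring_1"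
  shows "4 - (1+z)*(1+z)*(y*y) = (1-z)*(2 + (1+z)) + (1+z)*(1+z)*(x*x+z*z) + ((x^2+y^2+z^2) - 1)*(-((1+z)*(1+z)))"
  by (simp add: algebra_simps power2_eq_square)

lemma E1_PP: "4 - (1+X2)*(1+X2)*(X1*X1) \<in> PP"
proof -
  have "(1-X2)*(2 + (1+X2)) + (1+X2)*(1+X2)*(X0*X0+X2*X2) \<in> PP"
    by (intro PP_add PP_mult omX2 opX2 PP_numeral sq_PP)
  then show ?thesis using PP_eq_shift id_E1[of X2 X1 X0] unfolding RR_def by metis
qed

lemma id_E2:
  fixes z :: "'a::comm_ring_1"
  shows "24*z^4+24*z^3-24*z+9 = 6*((2*z*z+z-1)*(2*z*z+z-1)) + 2*((3*z-1)*(3*z-1)) + 1"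
  by (simp add: algebra_simps power2_eq_square power3_eq_cube power4_eq_xxxx)

lemma E2_PP: "24*X2^4+24*X2^3-24*X2+9 \<in> PP"
  unfolding id_E2 by (intro PP_add PP_mult PP_numeral sq_PP PP_1)

lemma id_l0:
  fixes x y z :: "'a::comm_ring_1"
  shows "192*(5*x + 5*y - z) - 24 = 192*((1+z)*(1+z))*(x*y^2 - z^3) + 192*x*(4 - (1+z)*(1+z)*(y*y))
     + 192*x*(1-x) + 960*y*(1-y) + 768*(y*y) + 192*((x^2+y^2+z^2) - 1)
     + 8*(1+z)*(24*z^4+24*z^3-24*z+9) + 72*(1-z) + 24"
  by (simp add: algebra_simps power2_eq_square power3_eq_cube power4_eq_xxxx)

lemma l0_MM: "5*X0 + 5*X1 - X2 - const (1/8) \<in> MM"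
proof -
  have m1: "gg * (192*((1+X2)*(1+X2))) \<in> MM" by (intro MM_mult_PP gg_MM PP_mult PP_numeral sq_PP)
  have m2: "X0 * (192*(4 - (1+X2)*(1+X2)*(X1*X1))) \<in> MM" by (intro MM_mult_PP X0_MM PP_mult PP_numeral E1_PP)
  have m3: "X0 * (192*(1-X0)) \<in> MM" by (intro MM_mult_PP X0_MM PP_mult PP_numeral omX0)
  have m4: "X1 * (960*(1-X1)) \<in> MM" by (intro MM_mult_PP X1_MM PP_mult PP_numeral omX1)
  have p5: "768*(X1*X1) + 192*(RR - 1) + 8*(1+X2)*(24*X2^4+24*X2^3-24*X2+9) + 72*(1-X2) + 24 \<in> PP"
  proof -
    have a: "768*(X1*X1) \<in> PP" by (rule PP_mult[OF PP_numeral sq_PP])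
    have b: "192*(RR - 1) \<in> PP" using ideal_PP[of 192] by (simp add: mult.commute)
    have c: "8*(1+X2)*(24*X2^4+24*X2^3-24*X2+9) \<in> PP" by (rule PP_mult[OF PP_mult[OF PP_numeral opX2] E2_PP])
    have d: "72*(1-X2) \<in> PP" by (rule PP_mult[OF PP_numeral omX2])
    show ?thesis by (rule PP_add[OF PP_add[OF PP_add[OF PP_add[OF a b] c] d] PP_numeral])
  qed
  have sum: "gg * (192*((1+X2)*(1+X2))) + X0 * (192*(4 - (1+X2)*(1+X2)*(X1*X1))) + X0 * (192*(1-X0))
     + X1 * (960*(1-X1)) + (768*(X1*X1) + 192*(RR - 1) + 8*(1+X2)*(24*X2^4+24*X2^3-24*X2+9) + 72*(1-X2) + 24) \<in> MM"
    by (intro MM_add m1 m2 m3 m4 PP_MM p5)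
  have eq: "gg * (192*((1+X2)*(1+X2))) + X0 * (192*(4 - (1+X2)*(1+X2)*(X1*X1))) + X0 * (192*(1-X0))
     + X1 * (960*(1-X1)) + (768*(X1*X1) + 192*(RR - 1) + 8*(1+X2)*(24*X2^4+24*X2^3-24*X2+9) + 72*(1-X2) + 24)
     = 192*(5*X0 + 5*X1 - X2) - 24"
    unfolding id_l0[of X0 X1 X2] gg_def RR_def by (simp add: algebra_simps)
  have e2: "const 192 * (5*X0 + 5*X1 - X2 - const (1/8)) = 192*(5*X0 + 5*X1 - X2) - 24"
    by (simp add: right_diff_distrib const_mult const_numeral[symmetric])
  have "192*(5*X0 + 5*X1 - X2) - 24 \<in> MM" using sum unfolding eq .
  then have "const 192 * (5*X0 + 5*X1 - X2 - const (1/8)) \<in> MM" unfolding e2 .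
  then show ?thesis by (rule MM_scale_inv) simp
qed




lemma id_lt1:
  fixes a b x y z :: "'a::comm_ring_1"
  shows "(a*x + 2*y - b*z) * ((a*x + 2*y + b*z)*(a*x + 2*y + b*z) + (a*x + 2*y)*(a*x + 2*y) + (b*z)*(b*z))
    = x*(2*a*((a*x-y)*(a*x-y))) + y*(16*((a*x-y)*(a*x-y))) + (x*y^2 - z^3)*(54*a) + 2*z^3*(27*a - b*b*b)"
  by (simp add: algebra_simps power2_eq_square power3_eq_cube)

lemma id_lt2:
  fixes a b x y z :: "'a::comm_ring_1"
  shows "(3*(a*a + 4 + b*b)) * (x^2+y^2+z^2) - ((a*x + 2*y + b*z)*(a*x + 2*y + b*z) + (a*x + 2*y)*(a*x + 2*y) + (b*z)*(b*z))
    = (a*x + 2*y - b*z)*(a*x + 2*y - b*z) + 3*((2*x - a*y)*(2*x - a*y)) + (3*(a*a+4))*(z*z) + (3*(b*b))*(x*x + y*y)"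
  by (simp add: algebra_simps power2_eq_square)

lemma id_lt3:
  fixes a b x y z :: "'a::comm_ring_1"
  shows "2 * ((a*x + 2*y + b*z)*(a*x + 2*y + b*z) + (a*x + 2*y)*(a*x + 2*y) + (b*z)*(b*z))
     - (a*x + 2*y - b*z)*(a*x + 2*y - b*z) = 3*((a*x + 2*y + b*z)*(a*x + 2*y + b*z))"
  by (simp add: algebra_simps)

lemma lt_MM:
  assumes t: "t > 0" and th: "th > 0"
  shows "const (t^3) * X0 + 2*X1 - const (3*t) * X2 + const th \<in> MM"
proof -
  define a where "a = const (t^3)"
  define b where "b = const (3*t)"
  define Q where "Q = (a*X0 + 2*X1 + b*X2)*(a*X0 + 2*X1 + b*X2) + (a*X0 + 2*X1)*(a*X0 + 2*X1) + (b*X2)*(b*X2)"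
  have aP: "a \<in> PP" unfolding a_def using t by (intro const_PP) simp
  have b3: "27*a - b*b*b = 0"
    unfolding a_def b_def by (simp add: const_mult const_numeral[symmetric] const_diff[symmetric] power3_eq_cube)
  have lQ: "(a*X0 + 2*X1 - b*X2) * Q \<in> MM"
  proof -
    have m1: "X0*(2*a*((a*X0-X1)*(a*X0-X1))) \<in> MM" by (rule MM_mult_PP[OF X0_MM PP_mult[OF PP_mult[OF PP_numeral aP] sq_PP]])
    have m2: "X1*(16*((a*X0-X1)*(a*X0-X1))) \<in> MM" by (rule MM_mult_PP[OF X1_MM PP_mult[OF PP_numeral sq_PP]])
    have m3: "gg*(54*a) \<in> MM" by (rule MM_mult_PP[OF gg_MM PP_mult[OF PP_numeral aP]])
    have "(a*X0 + 2*X1 - b*X2) * Q = X0*(2*a*((a*X0-X1)*(a*X0-X1))) + X1*(16*((a*X0-X1)*(a*X0-X1))) + gg*(54*a)"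
      unfolding Q_def id_lt1 b3 gg_def by simp
    then show ?thesis using MM_add[OF MM_add[OF m1 m2] m3] by simp
  qed
  have QP: "Q \<in> PP" unfolding Q_def by (intro PP_add sq_PP)
  define c1 where "c1 = 3*((t^3)*(t^3) + 4 + (3*t)*(3*t))"
  have c1: "c1 > 0" unfolding c1_def using t by (simp add: add_pos_nonneg)
  have c1e: "const c1 = 3*(a*a + 4 + b*b)"
  proof -
    have "const c1 = const 3 * (const (t^3) * const (t^3) + const 4 + const (3*t) * const (3*t))"
      unfolding c1_def by (simp only: const_mult[symmetric] const_add)
    then show ?thesis by (simp only: const_numeral a_def[symmetric] b_def[symmetric])
  qed
  have cQ: "const c1 * RR - Q \<in> PP"
  proof -
    have e: "const c1 * RR - Q = (a*X0 + 2*X1 - b*X2)*(a*X0 + 2*X1 - b*X2) + 3*((2*X0 - a*X1)*(2*X0 - a*X1)) + (3*(a*a+4))*(X2*X2) + (3*(b*b))*(X0*X0 + X1*X1)"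
      unfolding c1e Q_def RR_def by (rule id_lt2)
    have p1: "3*(a*a+4) \<in> PP" by (intro PP_mult PP_add PP_numeral sq_PP)
    have p2: "3*(b*b) \<in> PP" by (intro PP_mult PP_numeral sq_PP)
    show ?thesis unfolding e
      by (rule PP_add[OF PP_add[OF PP_add[OF sq_PP PP_mult[OF PP_numeral sq_PP]] PP_mult[OF p1 sq_PP]] PP_mult[OF p2 PP_add[OF sq_PP sq_PP]]])
  qed
  have kQ: "const 2 * Q - (a*X0 + 2*X1 - b*X2) * (a*X0 + 2*X1 - b*X2) \<in> PP"
  proof -
    have "const 2 * Q - (a*X0 + 2*X1 - b*X2) * (a*X0 + 2*X1 - b*X2) = 3*((a*X0 + 2*X1 + b*X2)*(a*X0 + 2*X1 + b*X2))"
      unfolding Q_def const_numeral by (rule id_lt3)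
    then show ?thesis by (simp add: PP_mult[OF PP_numeral sq_PP])
  qed
  have "a*X0 + 2*X1 - b*X2 + const th \<in> MM"
    by (rule arch[OF lQ QP cQ kQ c1 _ th]) simp
  then show ?thesis unfolding a_def b_def .
qed

lemma sep_MM:
  assumes t: "t > 0" and e: "e > 0"
  shows "const (t^3) * X0 + 2*X1 - const (3*t) * X2 + const e * (5*X0 + 5*X1 - X2) \<in> MM"
proof -
  have m1: "const (t^3) * X0 + 2*X1 - const (3*t) * X2 + const (e/8) \<in> MM"
    by (rule lt_MM[OF t]) (use e in simp)
  have m2: "(5*X0 + 5*X1 - X2 - const (1/8)) * const e \<in> MM"
    by (rule MM_mult_PP[OF l0_MM const_PP]) (use e in simp)
  have eq: "const (t^3) * X0 + 2*X1 - const (3*t) * X2 + const (e/8) + (5*X0 + 5*X1 - X2 - const (1/8)) * const e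
     = const (t^3) * X0 + 2*X1 - const (3*t) * X2 + const e * (5*X0 + 5*X1 - X2)"
  proof -
    have "const (1/8) * const e = const (e/8)" by (simp add: const_mult)
    then show ?thesis by (simp add: algebra_simps)
  qed
  show ?thesis using MM_add[OF m1 m2] unfolding eq .
qed




lemma amgm3: fixes X y :: real assumes "X \<ge> 0" "y \<ge> 0" shows "27 * X * y^2 \<le> (X + 2*y)^3"
proof -
  have "(X + 2*y)^3 - 27 * X * y^2 = (X - y)^2 * (X + 8*y)"
    by (simp add: algebra_simps power2_eq_square power3_eq_cube)
  moreover have "(X - y)^2 * (X + 8*y) \<ge> 0" using assms by simp
  ultimately show ?thesis by linarith
qed

lemma half_ineq:
  fixes x0 x1 x2 t :: real
  assumes "x0 \<ge> 0" "x1 \<ge> 0" "x0 * x1^2 - x2^3 \<ge> 0" "t > 0"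
  shows "3*t*x2 \<le> t^3 * x0 + 2*x1"
proof (cases "x2 \<le> 0")
  case True
  then have "3*t*x2 \<le> 0" using assms(4) by (simp add: mult_nonneg_nonpos)
  moreover have "0 \<le> t^3 * x0 + 2*x1" using assms by simp
  ultimately show ?thesis by linarith
next
  case False
  have "(3*t*x2)^3 = 27 * t^3 * x2^3" by (simp add: power_mult_distrib)
  also have "\<dots> \<le> 27 * t^3 * (x0 * x1^2)" using assms by (intro mult_left_mono) auto
  also have "\<dots> = 27 * (t^3 * x0) * x1^2" by simp
  also have "\<dots> \<le> (t^3 * x0 + 2*x1)^3" by (rule amgm3) (use assms in auto)
  finally have "(3*t*x2)^Suc 2 \<le> (t^3 * x0 + 2*x1)^Suc 2" by (simp add: numeral_3_eq_3)
  then show ?thesis by (rule power_le_imp_le_base) (use assms in simp)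
qed

lemma half_conv:
  fixes x0 x1 x2 :: real
  assumes "x0 \<ge> 0" "x1 \<ge> 0" and H: "\<And>t. t > 0 \<Longrightarrow> 3*t*x2 \<le> t^3 * x0 + 2*x1"
  shows "x0 * x1^2 - x2^3 \<ge> 0"
proof (cases "x2 \<le> 0")
  case True
  then have "x2^3 \<le> 0" by (simp add: power_le_zero_eq)
  moreover have "x0 * x1^2 \<ge> 0" using assms by simp
  ultimately show ?thesis by linarith
next
  case False
  then have x2: "x2 > 0" by simp
  show ?thesis
  proof (cases "x0 = 0")
    case True
    have "3*((2*x1+1)/(3*x2))*x2 \<le> ((2*x1+1)/(3*x2))^3 * x0 + 2*x1"
      using assms x2 by (intro H) (simp add: add_nonneg_pos)
    then have "2*x1 + 1 \<le> 2*x1" using True x2 by simp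
    then show ?thesis by simp
  next
    case False
    then have x0: "x0 > 0" using assms by simp
    define t where "t = sqrt (x2/x0)"
    have t: "t > 0" unfolding t_def using x0 x2 by simp
    have t2: "t^2 = x2/x0" unfolding t_def using x0 x2 by simp
    have "3*t*x2 \<le> t^3 * x0 + 2*x1" by (rule H[OF t])
    moreover have "t^3 * x0 = t * x2" using t2 x0 by (simp add: power3_eq_cube power2_eq_square field_simps)
    ultimately have "t * x2 \<le> x1" by simp
    then have "(t*x2)^2 \<le> x1^2" using t x2 by (intro power_mono) auto
    then have "x2/x0 * x2^2 \<le> x1^2" by (simp add: power_mult_distrib t2)
    then have "x2 * x2^2 \<le> x0 * x1^2" using x0 by (simp add: field_simps)
    then show ?thesis by (simp add: power3_eq_cube power2_eq_square)
  qed
qed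

definition hs :: "real \<Rightarrow> (real \<times> real \<times> real) set" where
  "hs t = {p. inner (t^3, 2, - 3*t) p \<ge> 0}"

lemma St_closed_eq: "St_closed = {p. inner (1,0,0) p \<ge> (0::real)} \<inter> {p. inner (0,1,0) p \<ge> (0::real)} \<inter> (\<Inter>t\<in>{0<..}. hs t)"
proof (intro set_eqI iffI)
  fix p assume "p \<in> St_closed"
  then obtain x0 x1 x2 where p: "p = (x0,x1,x2)" "x0 \<ge> 0" "x1 \<ge> 0" "x0 * x1^2 - x2^3 \<ge> 0"
    unfolding St_closed_def by auto
  have "\<forall>t>0. 3*t*x2 \<le> t^3 * x0 + 2*x1" using half_ineq p by blast
  then show "p \<in> {p. inner (1,0,0) p \<ge> (0::real)} \<inter> {p. inner (0,1,0) p \<ge> (0::real)} \<inter> (\<Inter>t\<in>{0<..}. hs t)"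
    using p by (auto simp: hs_def)
next
  fix p assume a: "p \<in> {p. inner (1,0,0) p \<ge> (0::real)} \<inter> {p. inner (0,1,0) p \<ge> (0::real)} \<inter> (\<Inter>t\<in>{0<..}. hs t)"
  obtain x0 x1 x2 where p: "p = (x0,x1,x2)" by (cases p) auto
  have h: "x0 \<ge> 0" "x1 \<ge> 0" using a p by auto
  have "\<And>t. t > 0 \<Longrightarrow> 3*t*x2 \<le> t^3 * x0 + 2*x1"
  proof -
    fix t :: real assume "t > 0"
    then have "p \<in> hs t" using a by auto
    then show "3*t*x2 \<le> t^3 * x0 + 2*x1" using p by (simp add: hs_def)
  qed
  then have "x0 * x1^2 - x2^3 \<ge> 0" using half_conv h by blast
  then show "p \<in> St_closed" using h p unfolding St_closed_def by auto
qed

lemma convex_St_closed: "convex St_closed"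
  unfolding St_closed_eq hs_def
  by (intro convex_Int convex_INT convex_halfspace_ge)

lemma closed_St_closed: "closed St_closed"
  unfolding St_closed_eq hs_def
  by (intro closed_Int closed_INT ballI closed_halfspace_ge)

lemma closure_St_open: "closure St_open = St_closed"
proof
  show "closure St_open \<subseteq> St_closed"
    by (rule closure_minimal[OF _ closed_St_closed]) (auto simp: St_open_def St_closed_def)
next
  show "St_closed \<subseteq> closure St_open"
  proof
    fix p assume "p \<in> St_closed"
    then obtain x0 x1 x2 where p: "p = (x0,x1,x2)" "x0 \<ge> 0" "x1 \<ge> 0" "x0 * x1^2 - x2^3 \<ge> 0"
      unfolding St_closed_def by auto
    show "p \<in> closure St_open"
      unfolding closure_approachable
    proof (intro allI impI)
      fix e :: real assume e: "e > 0"
      have "(x0 + e/2, x1, x2) \<in> St_open"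
      proof -
        have "(x0 + e/2) * x1^2 - x2^3 = (x0 * x1^2 - x2^3) + e/2 * x1^2" by (simp add: algebra_simps)
        moreover have "e/2 * x1^2 \<ge> 0" using e by simp
        ultimately have "(x0 + e/2) * x1^2 - x2^3 \<ge> 0" using p by linarith
        then show ?thesis using p e unfolding St_open_def by auto
      qed
      moreover have "dist (x0 + e/2, x1, x2) p < e" using e p by (simp add: dist_Pair_Pair dist_real_def)
      ultimately show "\<exists>y\<in>St_open. dist y p < e" by blast
    qed
  qed
qed

lemma pos_St_closed:
  assumes "p \<in> St_closed" "p \<noteq> 0"
  shows "(case p of (x0,x1,x2) \<Rightarrow> 2*x0 + 2*x1 - 3*x2 > 0)"
proof -
  obtain x0 x1 x2 where p: "p = (x0,x1,x2)" "x0 \<ge> 0" "x1 \<ge> 0" "x0 * x1^2 - x2^3 \<ge> 0"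
    using assms unfolding St_closed_def by auto
  have h1: "3*1*x2 \<le> 1^3 * x0 + 2*x1" by (rule half_ineq) (use p in auto)
  show ?thesis
  proof (rule ccontr)
    assume "\<not> ?thesis"
    then have le: "2*x0 + 2*x1 - 3*x2 \<le> 0" using p by simp
    then have "x0 = 0" using h1 p by simp
    then have "x2^3 \<le> 0" using p by simp
    then have "x2 \<le> 0" by (meson not_le zero_less_power)
    then have "x1 = 0" "x2 = 0" using le h1 p \<open>x0 = 0\<close> by auto
    then show False using assms p \<open>x0 = 0\<close> by (simp add: zero_prod_def)
  qed
qed

lemma pointed_St_closed: "St_closed \<inter> uminus ` St_closed = {0}"
proof
  show "{0} \<subseteq> St_closed \<inter> uminus ` St_closed"
  proof -
    have "0 \<in> St_closed" by (simp add: St_closed_def zero_prod_def)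
    then show ?thesis by (auto intro: image_eqI[of 0 uminus 0])
  qed
next
  show "St_closed \<inter> uminus ` St_closed \<subseteq> {0}"
  proof
    fix p assume a: "p \<in> St_closed \<inter> uminus ` St_closed"
    then obtain q where q: "q \<in> St_closed" "p = - q" by auto
    show "p \<in> {0}"
    proof (rule ccontr)
      assume "p \<notin> {0}"
      then have "p \<noteq> 0" "q \<noteq> 0" using q by auto
      then have "(case p of (x0,x1,x2) \<Rightarrow> 2*x0 + 2*x1 - 3*x2 > 0)"
        "(case q of (x0,x1,x2) \<Rightarrow> 2*x0 + 2*x1 - 3*x2 > 0)"
        using pos_St_closed a q by auto
      then show False using q by (cases q) auto
    qed
  qed
qed




lemma peval_sos: "is_sos s \<Longrightarrow> peval s v \<ge> 0"
proof -
  assume "is_sos s"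
  then obtain qs where s: "s = sum_list (map (\<lambda>q. q * q) qs)" unfolding is_sos_def by blast
  have "peval (sum_list (map (\<lambda>q. q * q) qs)) v \<ge> 0"
    by (induction qs) (auto simp: peval_add peval_mult)
  then show ?thesis using s by simp
qed

lemma Gt_nonneg:
  assumes "(a,b,c) \<in> St_closed" "a^2 + b^2 + c^2 = 1" "h \<in> Gt"
  shows "peval h (a,b,c) \<ge> 0"
  using assms unfolding Gt_def St_closed_def by (auto simp: peval_simps)

lemma quadmod_nonneg:
  assumes "l \<in> quadmod k Gt" "(a,b,c) \<in> St_closed" "a^2 + b^2 + c^2 = 1"
  shows "peval l (a,b,c) \<ge> 0"
proof -
  obtain \<sigma>0 \<sigma> where s: "is_sos \<sigma>0" "\<forall>h\<in>Gt. is_sos (\<sigma> h)" and l: "l = \<sigma>0 + (\<Sum>h\<in>Gt. \<sigma> h * h)"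
    using assms(1) unfolding quadmod_def by blast
  have "peval l (a,b,c) = peval \<sigma>0 (a,b,c) + (\<Sum>h\<in>Gt. peval (\<sigma> h) (a,b,c) * peval h (a,b,c))"
    unfolding l by (simp add: peval_add peval_sum peval_mult)
  moreover have "peval \<sigma>0 (a,b,c) \<ge> 0" by (rule peval_sos[OF s(1)])
  moreover have "(\<Sum>h\<in>Gt. peval (\<sigma> h) (a,b,c) * peval h (a,b,c)) \<ge> 0"
    using s(2) Gt_nonneg[OF assms(2,3)] peval_sos by (intro sum_nonneg mult_nonneg_nonneg) auto
  ultimately show ?thesis by simp
qed

lemma mdeg1: "mdeg m = 1 \<Longrightarrow> m \<in> {(1,0,0),(0,1,0),(0,0,1)}"
proof -
  assume a: "mdeg m = 1"
  obtain i j k where m: "m = (i,j,k)" by (cases m) auto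
  have "i + j + k = 1" using a m by (simp add: mdeg_def)
  then show ?thesis unfolding m by (cases i; cases j; cases k) simp_all
qed

lemma lin_peval:
  assumes "is_linform l"
  shows "peval l (a,b,c) = Poly_Mapping.lookup l (1,0,0) * a + Poly_Mapping.lookup l (0,1,0) * b
     + Poly_Mapping.lookup l (0,0,1) * c"
proof -
  have "Poly_Mapping.keys l \<subseteq> {(1,0,0),(0,1,0),(0,0,1)}"
    using assms mdeg1 unfolding is_linform_def by blast
  then have "peval l (a,b,c) = (\<Sum>m\<in>{(1,0,0),(0,1,0),(0,0,1)}. Poly_Mapping.lookup l m * mon m (a,b,c))"
    by (intro peval_superset) auto
  then show ?thesis by (simp add: mon_def)
qed

lemma THk_eq: "THk k G = (\<Inter>l\<in>{l\<in>quadmod k G. is_linform l}.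
   {z. inner (Poly_Mapping.lookup l (0,1,0), Poly_Mapping.lookup l (0,0,1)) z \<ge> - Poly_Mapping.lookup l (1,0,0)})"
proof -
  have e: "\<And>l a b. is_linform l \<Longrightarrow> (0 \<le> peval l (1,a,b)) =
     (inner (Poly_Mapping.lookup l (0,1,0), Poly_Mapping.lookup l (0,0,1)) (a,b) \<ge> - Poly_Mapping.lookup l (1,0,0))"
    by (simp add: lin_peval mult.commute) (rule iffI; linarith)
  show ?thesis unfolding THk_def by (auto simp: e)
qed

lemma THk_convex: "convex (THk k G)"
  unfolding THk_eq by (intro convex_INT convex_halfspace_ge)

lemma THk_closed: "closed (THk k G)"
  unfolding THk_eq by (intro closed_INT ballI closed_halfspace_ge)

lemma S_THk: "S \<subseteq> THk k Gt"
proof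
  fix z assume "z \<in> S"
  then obtain x1 x2 where z: "z = (x1,x2)" "x1 \<ge> 0" "x1^2 - x2^3 \<ge> 0" unfolding S_def by auto
  define r where "r = sqrt (1 + x1^2 + x2^2)"
  have r: "r > 0" unfolding r_def by (simp add: add_pos_nonneg)
  have r2: "r^2 = 1 + x1^2 + x2^2" unfolding r_def by (simp add: add_nonneg_nonneg)
  have inS: "(1/r, x1/r, x2/r) \<in> St_closed"
  proof -
    have "1/r * (x1/r)^2 - (x2/r)^3 = (x1^2 - x2^3) / r^3"
      using r by (simp add: field_simps power2_eq_square power3_eq_cube)
    also have "\<dots> \<ge> 0" using z r by simp
    finally show ?thesis using r z unfolding St_closed_def by simp
  qed
  have pos: "1 + x1^2 + x2^2 > 0" by (simp add: add_pos_nonneg)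
  have sph: "(1/r)^2 + (x1/r)^2 + (x2/r)^2 = 1"
    using r r2 pos by (simp add: power_divide add_divide_distrib[symmetric])
  show "z \<in> THk k Gt"
    unfolding THk_def z
  proof (clarify)
    fix l assume l: "l \<in> quadmod k Gt" "is_linform l"
    have "peval l (1/r, x1/r, x2/r) \<ge> 0" by (rule quadmod_nonneg[OF l(1) inS sph])
    moreover have "peval l (1, x1, x2) = r * peval l (1/r, x1/r, x2/r)"
      using r by (simp add: lin_peval[OF l(2)] field_simps)
    ultimately show "peval l (1, x1, x2) \<ge> 0" using r by simp
  qed
qed




lemma neq_peval: "peval p v \<noteq> peval q v \<Longrightarrow> p \<noteq> q" by auto

lemma MM_quadmod: "p \<in> MM \<Longrightarrow> \<exists>k\<ge>1. p \<in> quadmod k Gt"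
proof -
  assume "p \<in> MM"
  then obtain s0 s1 s2 s3 q where s: "is_sos s0" "is_sos s1" "is_sos s2" "is_sos s3"
    and p: "p = s0 + X1 * s1 + gg * s2 + X0 * s3 + (RR - 1) * q" by (rule MM_E)
  define g' :: poly3 where "g' = X0 * X1^2 - X2^3"
  define h4 :: poly3 where "h4 = X0^2 + X1^2 + X2^2 - 1"
  define h5 :: poly3 where "h5 = 1 - X0^2 - X1^2 - X2^2"
  have Gt: "Gt = insert X1 (insert g' (insert X0 (insert h4 {h5})))"
    unfolding Gt_def g'_def h4_def h5_def by simp
  have d1: "X1 \<noteq> g'" "X1 \<noteq> X0" "X1 \<noteq> h4" "X1 \<noteq> h5"
    by (rule neq_peval[where v="(0,1,0)"], simp add: g'_def h4_def h5_def peval_simps)+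
  have d2: "g' \<noteq> X0" by (rule neq_peval[where v="(1,0,0)"]) (simp add: g'_def peval_simps)
  have d3: "g' \<noteq> h4" "g' \<noteq> h5" "X0 \<noteq> h4" "X0 \<noteq> h5" "h4 \<noteq> h5"
    by (rule neq_peval[where v="(0,0,0)"], simp add: g'_def h4_def h5_def peval_simps)+
  define H where "H = const (1/2)"
  define qa where "qa = H * (q + 1)"
  define qb where "qb = H * (q - 1)"
  have HH: "H * H * 4 = 1" unfolding H_def by (simp add: const_mult const_numeral[symmetric])
  have "qa * qa - qb * qb = H * H * 4 * q" unfolding qa_def qb_def by (simp add: algebra_simps)
  then have qq: "qa * qa - qb * qb = q" using HH by simp
  define \<sigma> where "\<sigma> = (\<lambda>h. if h = X1 then s1 else if h = g' then s2 else if h = X0 then s3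
       else if h = h4 then qa * qa else qb * qb)"
  have sum: "(\<Sum>h\<in>Gt. \<sigma> h * h) = s1 * X1 + (s2 * g' + (s3 * X0 + (qa * qa * h4 + qb * qb * h5)))"
    unfolding Gt using d1 d2 d3 by (simp add: \<sigma>_def)
  have peq: "p = s0 + (\<Sum>h\<in>Gt. \<sigma> h * h)"
  proof -
    have "qa * qa * h4 + qb * qb * h5 = (RR - 1) * (qa * qa - qb * qb)"
      unfolding h4_def h5_def RR_def by (simp add: algebra_simps)
    then show ?thesis unfolding sum p qq g'_def gg_def by (simp add: algebra_simps)
  qed
  have sos: "\<forall>h\<in>Gt. is_sos (\<sigma> h)" using s by (simp add: \<sigma>_def is_sos_sq)
  define k where "k = pdeg s0 + (\<Sum>h\<in>Gt. pdeg (\<sigma> h * h)) + 1"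
  have fin: "finite Gt" unfolding Gt by simp
  have k1: "pdeg s0 \<le> 2*k" unfolding k_def by simp
  have k2: "\<forall>h\<in>Gt. pdeg (\<sigma> h * h) \<le> 2*k"
  proof
    fix h assume "h \<in> Gt"
    then have "pdeg (\<sigma> h * h) \<le> (\<Sum>h\<in>Gt. pdeg (\<sigma> h * h))" by (intro member_le_sum fin) auto
    then show "pdeg (\<sigma> h * h) \<le> 2*k" unfolding k_def by simp
  qed
  have "p \<in> quadmod k Gt" unfolding quadmod_def using s(1) k1 sos k2 peq by blast
  moreover have "k \<ge> 1" unfolding k_def by simp
  ultimately show ?thesis by blast
qed

lemma keys_const_mult: "Poly_Mapping.keys (const a * p) \<subseteq> Poly_Mapping.keys p"
proof -
  have "Poly_Mapping.keys (const a * p) \<subseteq> {x + y |x y. x \<in> Poly_Mapping.keys (const a) \<and> y \<in> Poly_Mapping.keys p}"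
    by (rule keys_mult)
  also have "\<dots> \<subseteq> Poly_Mapping.keys p" by (auto simp: const_def zero_prod_def split: if_splits)
  finally show ?thesis .
qed

lemma lin_add: "is_linform p \<Longrightarrow> is_linform q \<Longrightarrow> is_linform (p + q)"
  unfolding is_linform_def using keys_add[of p q] by blast
lemma lin_diff: "is_linform p \<Longrightarrow> is_linform q \<Longrightarrow> is_linform (p - q)"
  unfolding is_linform_def using keys_diff[of p q] by blast
lemma lin_cmul: "is_linform p \<Longrightarrow> is_linform (const a * p)"
  unfolding is_linform_def using keys_const_mult[of a p] by blast
lemma lin_X0: "is_linform X0" unfolding is_linform_def X0_def by (simp add: mdeg_def)
lemma lin_X1: "is_linform X1" unfolding is_linform_def X1_def by (simp add: mdeg_def)
lemma lin_X2: "is_linform X2" unfolding is_linform_def X2_def by (simp add: mdeg_def)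

lemma lin_L: "is_linform (const (t^3) * X0 + 2*X1 - const (3*t) * X2 + const e * (5*X0 + 5*X1 - X2))"
proof -
  have "is_linform (const (t^3) * X0 + const 2 * X1 - const (3*t) * X2 + const e * (const 5 * X0 + const 5 * X1 - X2))"
    by (intro lin_add lin_diff lin_cmul lin_X0 lin_X1 lin_X2)
  then show ?thesis by (simp only: const_numeral)
qed

lemma inter_S:
  assumes "(x1,x2) \<in> (\<Inter>k\<in>{1..}. THk k Gt)"
  shows "(x1,x2) \<in> S"
proof (rule ccontr)
  assume nS: "(x1,x2) \<notin> S"
  have use: "peval L (1,x1,x2) \<ge> 0" if L: "L \<in> MM" and lin: "is_linform L" for L
  proof -
    obtain k where k: "k \<ge> 1" "L \<in> quadmod k Gt" using MM_quadmod[OF L] by blast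
    then have "(x1,x2) \<in> THk k Gt" using assms by auto
    then show ?thesis using k lin unfolding THk_def by auto
  qed
  show False
  proof (cases "x1 < 0")
    case True
    then show False using use[OF X1_MM lin_X1] by simp
  next
    case False
    then have x1: "x1 \<ge> 0" by simp
    then have lt: "x1^2 < x2^3" using nS unfolding S_def by auto
    have x2: "x2 > 0"
    proof (rule ccontr)
      assume "\<not> x2 > 0"
      then have "x2^3 \<le> 0" by (simp add: power_le_zero_eq)
      then show False using lt by (metis not_le zero_le_power2 order_trans)
    qed
    define t where "t = sqrt x2"
    have t: "t > 0" unfolding t_def using x2 by simp
    have t2: "t^2 = x2" unfolding t_def using x2 by simp
    have "(t^3)^2 = (t^2)^3" by (simp add: power_mult[symmetric])
    then have "x1^2 < (t^3)^2" using lt t2 by simp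
    then have x1t: "x1 < t^3" by (rule power_less_imp_less_base) (use t in simp)
    define v where "v = t^3 + 2*x1 - 3*t*x2"
    have "t * x2 = t^3" using t2 by (simp add: power2_eq_square power3_eq_cube)
    then have v: "v < 0" unfolding v_def using x1t by simp
    define w where "w = 5 + 5*x1 - x2"
    define D where "D = \<bar>w\<bar> + 1"
    have D: "D > 0" unfolding D_def by simp
    define e where "e = - v / (2*D)"
    have "v / (2*D) < 0" by (rule divide_neg_pos) (use v D in auto)
    then have e: "e > 0" unfolding e_def by simp
    have "e * w \<le> e * \<bar>w\<bar>" using e by (simp add: mult_left_mono)
    also have "\<dots> < e * D" using e unfolding D_def by simp
    also have "\<dots> = - v / 2" unfolding e_def using D by simp
    finally have ew: "e * w < - v / 2" .
    have "peval (const (t^3) * X0 + 2*X1 - const (3*t) * X2 + const e * (5*X0 + 5*X1 - X2)) (1,x1,x2) = v + e * w"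
      unfolding v_def w_def by (simp add: peval_simps)
    moreover have "peval (const (t^3) * X0 + 2*X1 - const (3*t) * X2 + const e * (5*X0 + 5*X1 - X2)) (1,x1,x2) \<ge> 0"
      by (rule use[OF sep_MM[OF t e] lin_L])
    ultimately show False using ew v by linarith
  qed
qed

theorem mainTheorem17:
  shows "closure St_open = St_closed
    \<and> (\<forall>x\<in>convex hull (closure St_open) - {0}.
         (case x of (x0,x1,x2) \<Rightarrow> 2*x0 + 2*x1 - 3*x2 > 0))
    \<and> closed (convex hull (closure St_open))
    \<and> convex hull (closure St_open) \<inter> uminus ` (convex hull (closure St_open)) = {0}
    \<and> closure (convex hull S) = (\<Inter>k\<in>{1..}. THk k Gt)"
proof -
  have H: "convex hull (closure St_open) = St_closed"
    unfolding closure_St_open by (simp add: convex_hull_eq convex_St_closed)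
  have P5: "closure (convex hull S) = (\<Inter>k\<in>{1..}. THk k Gt)"
  proof
    show "closure (convex hull S) \<subseteq> (\<Inter>k\<in>{1..}. THk k Gt)"
    proof (rule INT_greatest)
      fix k :: nat
      show "closure (convex hull S) \<subseteq> THk k Gt"
      proof (rule closure_minimal[OF _ THk_closed])
        show "convex hull S \<subseteq> THk k Gt"
          by (rule hull_minimal[where S=convex]) (simp_all add: S_THk THk_convex)
      qed
    qed
  next
    show "(\<Inter>k\<in>{1..}. THk k Gt) \<subseteq> closure (convex hull S)"
    proof
      fix z assume "z \<in> (\<Inter>k\<in>{1..}. THk k Gt)"
      then have "z \<in> S" using inter_S by (cases z) auto
      moreover have "S \<subseteq> convex hull S" by (rule hull_subset)
      moreover have "convex hull S \<subseteq> closure (convex hull S)" by (rule closure_subset)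
      ultimately show "z \<in> closure (convex hull S)" by blast
    qed
  qed
  have P2: "\<forall>x\<in>St_closed - {0}. (case x of (x0,x1,x2) \<Rightarrow> 2*x0 + 2*x1 - 3*x2 > 0)"
    using pos_St_closed by blast
  show ?thesis unfolding H
    using closure_St_open P2 closed_St_closed pointed_St_closed P5 by (intro conjI)
qed


end
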